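(* Let $p\geq 2$, let $K\geq 1$ be such that $[0,1]^2$ is partitioned into the collection $\mathcal{C}_K$ of squares of side length $K^{-1}$, and let $F:\mathbb{R}^3\to\mathbb{C}$ with $\mathrm{supp}(\widehat F)\subseteq\mathcal{N}(\delta)$ for some $\delta>0$. Let $B\subseteq\mathbb{R}^3$ be a ball of radius $K^2$. Let $\alpha^*\in\mathcal{C}_K$ satisfy $\|\mathcal{P}_{\alpha^*}F\|_{L^p(B)}=\max_{\alpha\in\mathcal{C}_K}\|\mathcal{P}_\alpha F\|_{L^p(B)}$, and let $$S_{big}=\Big\{\alpha\in\mathcal{C}_K:\|\mathcal{P}_\alpha F\|_{L^p(B)}\geq\frac{1}{100K^2}\|F\|_{L^p(B)}\Big\}.$$ Then at least one of the following holds, with implicit constants independent of $K$, $B$, $F$: (i) $\|F\|_{L^p(B)}\lesssim\max_{\alpha\in\mathcal{C}_K}\|\mathcal{P}_\alpha F\|_{L^p(B)}$; (ii) there is a line $L\subseteq\mathbb{R}^2$ such that $\|F\|_{L^p(B)}\lesssim\big\|\sum_{\alpha\in S_{big},\,\alpha\subseteq S_L}\mathcal{P}_\alpha F\big\|_{L^p(B)}$, where $S_L=\{\xi\in\mathbb{R}^2:\mathrm{dist}(\xi,L)\leq 100K^{-1}\}$; (iii) there are three $K^{-2}$-transverse squares $\alpha_1,\alpha_2,\alpha_3\in\mathcal{C}_K$ such that $\|F\|_{L^p(B)}\lesssim K^2\big(\prod_{i=1}^3\|\mathcal{P}_{\alpha_i}F\|_{L^p(B)}\big)^{1/3}$.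
   Context: $\mathcal{N}(\delta)=\{(\xi,|\xi|^2+t):\xi\in[0,1]^2,t\in[0,\delta]\}\subseteq\mathbb{R}^3$. For $\alpha\subseteq\mathbb{R}^2$, $\mathcal{P}_\alpha$ is the Fourier projection in $\mathbb{R}^3$ onto $\alpha\times\mathbb{R}$: $\widehat{\mathcal{P}_\alpha F}=\widehat F\mathbbm{1}_{\alpha\times\mathbb{R}}$. Squares $Q_1,Q_2,Q_3\subseteq[0,1]^2$ are $\nu$-transverse if for every choice of points $P_i$ on the paraboloid $\{(\xi,|\xi|^2):\xi\in[0,1]^2\}$ whose orthogonal projection onto $[0,1]^2$ lies in $Q_i$, the volume spanned by the unit normals $n(P_1),n(P_2),n(P_3)$ to the paraboloid at these points is larger than $\nu$. *)

theory Defs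
  imports "HOL-Analysis.Analysis"
begin

text \<open>Conventions: R^2 is real \<times> real (frequency variable \<xi>), R^3 is
real \<times> real \<times> real; a frequency point (a, b, c) has \<xi> = (a, b) and height c.\<close>

type_synonym R2 = "real \<times> real"
type_synonym R3 = "real \<times> real \<times> real"

definition Nbhd :: "real \<Rightarrow> R3 set" where
  "Nbhd \<delta> = {(a, b, c). 0 \<le> a \<and> a \<le> 1 \<and> 0 \<le> b \<and> b \<le> 1 \<and>
                         a\<^sup>2 + b\<^sup>2 \<le> c \<and> c \<le> a\<^sup>2 + b\<^sup>2 + \<delta>}"

definition invft :: "(R3 \<Rightarrow> complex) \<Rightarrow> R3 \<Rightarrow> complex" where
  "invft G x = integral\<^sup>L lborel (\<lambda>\<omega>. G \<omega> * cis (2 * pi * (x \<bullet> \<omega>)))"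

text \<open>Fourier projection onto alpha \<times> R, for F = invft G (so that F^ = G).\<close>
definition proj :: "R2 set \<Rightarrow> (R3 \<Rightarrow> complex) \<Rightarrow> R3 \<Rightarrow> complex" where
  "proj \<alpha> G = invft (\<lambda>\<omega>. if (fst \<omega>, fst (snd \<omega>)) \<in> \<alpha> then G \<omega> else 0)"

definition Lpn :: "real \<Rightarrow> R3 set \<Rightarrow> (R3 \<Rightarrow> complex) \<Rightarrow> real" where
  "Lpn p B f = (LINT x:B|lborel. norm (f x) powr p) powr (1 / p)"

definition squares :: "nat \<Rightarrow> R2 set set" where
  "squares K = {{real i / real K .. (real i + 1) / real K} \<times> {real j / real K .. (real j + 1) / real K}
                 | i j. i < K \<and> j < K}"

text \<open>Unit normal to the paraboloid at (\<xi>, |\<xi>|^2).\<close>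
definition unormal :: "R2 \<Rightarrow> R3" where
  "unormal \<xi> = (let s = sqrt (1 + 4 * ((fst \<xi>)\<^sup>2 + (snd \<xi>)\<^sup>2)) in
                 (- 2 * fst \<xi> / s, - 2 * snd \<xi> / s, 1 / s))"

definition det3 :: "R3 \<Rightarrow> R3 \<Rightarrow> R3 \<Rightarrow> real" where
  "det3 u v w = (case u of (u1, u2, u3) \<Rightarrow> case v of (v1, v2, v3) \<Rightarrow> case w of (w1, w2, w3) \<Rightarrow>
      u1 * (v2 * w3 - v3 * w2) - u2 * (v1 * w3 - v3 * w1) + u3 * (v1 * w2 - v2 * w1))"

definition transverse :: "real \<Rightarrow> R2 set \<Rightarrow> R2 set \<Rightarrow> R2 set \<Rightarrow> bool" where
  "transverse \<nu> Q1 Q2 Q3 \<longleftrightarrow>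
     (\<forall>\<xi>1\<in>Q1 \<inter> ({0..1} \<times> {0..1}). \<forall>\<xi>2\<in>Q2 \<inter> ({0..1} \<times> {0..1}). \<forall>\<xi>3\<in>Q3 \<inter> ({0..1} \<times> {0..1}).
        \<bar>det3 (unormal \<xi>1) (unormal \<xi>2) (unormal \<xi>3)\<bar> > \<nu>)"

definition is_line :: "R2 set \<Rightarrow> bool" where
  "is_line L \<longleftrightarrow> (\<exists>a v. v \<noteq> 0 \<and> L = {a + t *\<^sub>R v | t. True})"

definition strip :: "nat \<Rightarrow> R2 set \<Rightarrow> R2 set" where
  "strip K L = {\<xi>. infdist \<xi> L \<le> 100 / real K}"

end

theory Submission
  imports Defs
begin
lemma cross_bound: "\<bar>x1*y2 - x2*(y1::real)\<bar> \<le> sqrt(x1\<^sup>2+x2\<^sup>2) * sqrt(y1\<^sup>2+y2\<^sup>2)"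
proof -
  have "(x1*y2 - x2*y1)\<^sup>2 \<le> (x1\<^sup>2+x2\<^sup>2) * (y1\<^sup>2+y2\<^sup>2)"
  proof -
    have "(x1\<^sup>2+x2\<^sup>2) * (y1\<^sup>2+y2\<^sup>2) = (x1*y2 - x2*y1)\<^sup>2 + (x1*y1+x2*y2)\<^sup>2"
      by (simp add: power2_eq_square algebra_simps)
    then show ?thesis by simp
  qed
  then have "sqrt ((x1*y2 - x2*y1)\<^sup>2) \<le> sqrt ((x1\<^sup>2+x2\<^sup>2) * (y1\<^sup>2+y2\<^sup>2))"
    using real_sqrt_le_mono by blast
  then show ?thesis by (simp add: real_sqrt_mult)
qed

lemma key_geo:
  fixes V1 V2 Q1 Q2 f1 f2 d11 d12 d21 d22 :: real
  assumes V: "V1\<^sup>2 + V2\<^sup>2 \<ge> 1"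
    and far: "(V1*(Q2+f2) - V2*(Q1+f1))\<^sup>2 > 10000*(V1\<^sup>2+V2\<^sup>2)"
    and Q: "Q1\<^sup>2+Q2\<^sup>2 \<le> V1\<^sup>2+V2\<^sup>2"
    and f: "0\<le>f1" "f1\<le>1" "0\<le>f2" "f2\<le>1"
    and d: "\<bar>d11\<bar>\<le>1" "\<bar>d12\<bar> \<le> 1" "\<bar>d21\<bar>\<le>1" "\<bar>d22\<bar>\<le>1"
  shows "\<bar>(V1+d11)*(Q2+d22) - (V2+d12)*(Q1+d21)\<bar> \<ge> 7"
proof -
  define a where "a = sqrt (V1\<^sup>2+V2\<^sup>2)"
  have a1: "a \<ge> 1" using V unfolding a_def by simp
  have s2: "sqrt 2 \<le> (1.5::real)"
    by (rule real_le_lsqrt) (auto simp: power2_eq_square)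
  have h1: "\<bar>V1*(Q2+f2) - V2*(Q1+f1)\<bar> > 100*a"
  proof -
    have "sqrt (10000*(V1\<^sup>2+V2\<^sup>2)) < sqrt ((V1*(Q2+f2) - V2*(Q1+f1))\<^sup>2)"
      using far real_sqrt_less_mono by blast
    moreover have "sqrt (10000*(V1\<^sup>2+V2\<^sup>2)) = 100 * a"
    proof -
      have "(100*a)\<^sup>2 = 10000*(V1\<^sup>2+V2\<^sup>2)" unfolding a_def
        by (simp add: power_mult_distrib)
      then show ?thesis using a1 by (metis real_sqrt_abs abs_of_nonneg mult_nonneg_nonneg zero_le_numeral order_trans zero_le_one)
    qed
    ultimately show ?thesis by simp
  qed
  have sq_le: "sqrt (x\<^sup>2+y\<^sup>2) \<le> sqrt 2" if "\<bar>x\<bar>\<le>1" "\<bar>y\<bar>\<le>1" for x y :: real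
  proof -
    have "x\<^sup>2 \<le> 1" "y\<^sup>2 \<le> 1" using that abs_square_le_1 by blast+
    then show ?thesis by simp
  qed
  have h2: "\<bar>V1*f2 - V2*f1\<bar> \<le> 1.5*a"
  proof -
    have "\<bar>V1*f2 - V2*f1\<bar> \<le> a * sqrt(f1\<^sup>2+f2\<^sup>2)" using cross_bound unfolding a_def by blast
    also have "\<dots> \<le> a * 1.5" using order_trans[OF sq_le[of f1 f2] s2] f a1 by (intro mult_left_mono) auto
    finally show ?thesis by simp
  qed
  have h3: "\<bar>V1*d22 - V2*d21\<bar> \<le> 1.5*a"
  proof -
    have "\<bar>V1*d22 - V2*d21\<bar> \<le> a * sqrt(d21\<^sup>2+d22\<^sup>2)" using cross_bound unfolding a_def by blast
    also have "\<dots> \<le> a * 1.5" using order_trans[OF sq_le[of d21 d22] s2] d a1 by (intro mult_left_mono) auto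
    finally show ?thesis by simp
  qed
  have h4: "\<bar>d11*Q2 - d12*Q1\<bar> \<le> 1.5*a"
  proof -
    have "\<bar>d11*Q2 - d12*Q1\<bar> \<le> sqrt(d11\<^sup>2+d12\<^sup>2) * sqrt(Q1\<^sup>2+Q2\<^sup>2)" using cross_bound by blast
    also have "\<dots> \<le> 1.5 * a" using order_trans[OF sq_le[of d11 d12] s2] d Q unfolding a_def
      by (intro mult_mono) auto
    finally show ?thesis by simp
  qed
  have h5: "\<bar>d11*d22 - d12*d21\<bar> \<le> 2"
  proof -
    have "\<bar>d11*d22\<bar> \<le> 1" "\<bar>d12*d21\<bar> \<le> 1" using d by (simp_all add: abs_mult mult_le_one)
    then show ?thesis by linarith
  qed
  have e: "(V1+d11)*(Q2+d22) - (V2+d12)*(Q1+d21) = (V1*(Q2+f2) - V2*(Q1+f1)) - (V1*f2 - V2*f1)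
      + (V1*d22 - V2*d21) + (d11*Q2 - d12*Q1) + (d11*d22 - d12*d21)"
    by (simp add: algebra_simps)
  show ?thesis unfolding e using h1 h2 h3 h4 h5 a1 by linarith
qed

definition sqr :: "nat \<Rightarrow> nat \<Rightarrow> nat \<Rightarrow> R2 set" where
  "sqr K i j = {real i / real K .. (real i + 1) / real K} \<times> {real j / real K .. (real j + 1) / real K}"

lemma squares_eq: "squares K = (\<lambda>(i,j). sqr K i j) ` ({..<K} \<times> {..<K})"
  unfolding squares_def sqr_def by auto

lemma finite_squares: "finite (squares K)"
  unfolding squares_eq by simp

lemma card_squares: "card (squares K) \<le> K^2"
proof -
  have "card (squares K) \<le> card ({..<K} \<times> {..<K})"
    unfolding squares_eq by (rule card_image_le) simp
  then show ?thesis by (simp add: power2_eq_square)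
qed

lemma mem_sqr: 
  assumes "K \<ge> 1" "\<xi> \<in> sqr K i j"
  shows "0 \<le> real K * fst \<xi> - real i" "real K * fst \<xi> - real i \<le> 1"
        "0 \<le> real K * snd \<xi> - real j" "real K * snd \<xi> - real j \<le> 1"
proof -
  have K: "real K > 0" using assms by simp
  from assms(2) have a: "real i / real K \<le> fst \<xi>" "fst \<xi> \<le> (real i + 1) / real K"
     "real j / real K \<le> snd \<xi>" "snd \<xi> \<le> (real j + 1) / real K"
    unfolding sqr_def by (auto simp: mem_Times_iff)
  show "0 \<le> real K * fst \<xi> - real i" "real K * fst \<xi> - real i \<le> 1"
        "0 \<le> real K * snd \<xi> - real j" "real K * snd \<xi> - real j \<le> 1"
    using a K by (simp_all add: field_simps)
qed

lemma det_lemma: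
  fixes x y z :: R2
  assumes "x \<in> {0..1} \<times> {0..1}" "y \<in> {0..1} \<times> {0..1}" "z \<in> {0..1} \<times> {0..1}"
  shows "\<bar>det3 (unormal x) (unormal y) (unormal z)\<bar> \<ge>
     4/27 * \<bar>(fst y - fst x)*(snd z - snd x) - (snd y - snd x)*(fst z - fst x)\<bar>"
proof -
  obtain x1 x2 y1 y2 z1 z2 where xyz: "x = (x1,x2)" "y = (y1,y2)" "z = (z1,z2)"
    by (cases x, cases y, cases z) auto
  define sx where "sx = sqrt (1 + 4 * (x1\<^sup>2 + x2\<^sup>2))"
  define sy where "sy = sqrt (1 + 4 * (y1\<^sup>2 + y2\<^sup>2))"
  define sz where "sz = sqrt (1 + 4 * (z1\<^sup>2 + z2\<^sup>2))"
  have sb: "1 \<le> sqrt (1 + 4 * (a\<^sup>2 + b\<^sup>2)) \<and> sqrt (1 + 4 * (a\<^sup>2 + b\<^sup>2)) \<le> 3"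
    if "0 \<le> a" "a \<le> 1" "0 \<le> b" "b \<le> 1" for a b :: real
  proof
    show "1 \<le> sqrt (1 + 4 * (a\<^sup>2 + b\<^sup>2))" by simp
    have "a\<^sup>2 \<le> 1" "b\<^sup>2 \<le> 1" using that by (simp_all add: power_le_one)
    then have "1 + 4 * (a\<^sup>2 + b\<^sup>2) \<le> 3\<^sup>2" by simp
    then show "sqrt (1 + 4 * (a\<^sup>2 + b\<^sup>2)) \<le> 3" by (rule real_le_lsqrt[rotated]) simp
  qed
  have sx: "1 \<le> sx" "sx \<le> 3" using sb[of x1 x2] assms(1) xyz unfolding sx_def by auto
  have sy: "1 \<le> sy" "sy \<le> 3" using sb[of y1 y2] assms(2) xyz unfolding sy_def by auto
  have sz: "1 \<le> sz" "sz \<le> 3" using sb[of z1 z2] assms(3) xyz unfolding sz_def by auto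
  define c where "c = (y1 - x1)*(z2 - x2) - (y2 - x2)*(z1 - x1)"
  have d: "det3 (unormal x) (unormal y) (unormal z) = 4 * c / (sx * sy * sz)"
  proof -
    have ux: "unormal x = (-2*x1/sx, -2*x2/sx, 1/sx)" unfolding xyz unormal_def sx_def Let_def by simp
    have uy: "unormal y = (-2*y1/sy, -2*y2/sy, 1/sy)" unfolding xyz unormal_def sy_def Let_def by simp
    have uz: "unormal z = (-2*z1/sz, -2*z2/sz, 1/sz)" unfolding xyz unormal_def sz_def Let_def by simp
    show ?thesis unfolding ux uy uz det3_def c_def using sx sy sz
      by (simp add: field_simps)
  qed
  have p: "sx * sy * sz \<le> 27" "sx * sy * sz > 0"
  proof -
    have "sx * sy \<le> 3 * 3" using sx sy by (intro mult_mono) auto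
    then have "sx * sy * sz \<le> 9 * sz" using sz by (intro mult_right_mono) auto
    then show "sx * sy * sz \<le> 27" using sz by linarith
    show "sx * sy * sz > 0" using sx sy sz by simp
  qed
  have "4/27 * \<bar>c\<bar> = 4 * \<bar>c\<bar> / 27" by simp
  also have "\<dots> \<le> 4 * \<bar>c\<bar> / (sx * sy * sz)"
    using p by (intro frac_le) auto
  also have "\<dots> = \<bar>det3 (unormal x) (unormal y) (unormal z)\<bar>"
    unfolding d using p sx sy sz by (simp add: abs_mult)
  finally show ?thesis unfolding c_def xyz by simp
qed

lemma invft_bound:
  assumes "integrable lborel H"
  shows "norm (invft H x) \<le> (\<integral>\<omega>. norm (H \<omega>) \<partial>lborel)"
proof -
  have "norm (invft H x) \<le> (\<integral>\<omega>. norm (H \<omega> * cis (2 * pi * (x \<bullet> \<omega>))) \<partial>lborel)"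
    unfolding invft_def by (rule integral_norm_bound)
  also have "\<dots> = (\<integral>\<omega>. norm (H \<omega>) \<partial>lborel)" by (simp add: norm_mult)
  finally show ?thesis .
qed

lemma cis_meas: "(\<lambda>z::R3\<times>R3. cis (2 * pi * (fst z \<bullet> snd z))) \<in> borel_measurable borel"
  apply (rule borel_measurable_continuous_onI)
  apply (intro continuous_intros)
  done

lemma cis_meas2: "(\<lambda>z::R3\<times>R3. cis (2 * pi * (fst z \<bullet> snd z))) \<in> borel_measurable (lborel \<Otimes>\<^sub>M lborel)"
  apply (subst measurable_cong_sets[OF sets_pair_measure_cong[OF sets_lborel sets_lborel] refl])
  apply (subst borel_prod)
  apply (rule cis_meas)
  done

lemma invft_meas:
  assumes "integrable lborel H"
  shows "invft H \<in> borel_measurable lborel"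
proof -
  have [measurable]: "H \<in> borel_measurable lborel" using assms by (rule borel_measurable_integrable)
  show ?thesis unfolding invft_def
  proof (rule lborel.borel_measurable_lebesgue_integral)
    have h2: "(\<lambda>z::R3\<times>R3. H (snd z)) \<in> borel_measurable (lborel \<Otimes>\<^sub>M lborel)"
      by measurable
    show "(\<lambda>(x, \<omega>). H \<omega> * cis (2 * pi * (x \<bullet> \<omega>))) \<in> borel_measurable (lborel \<Otimes>\<^sub>M lborel)"
      using borel_measurable_times[OF h2 cis_meas2] by (simp add: case_prod_beta)
  qed
qed

lemma sel_meas0: "(\<lambda>\<omega>::R3. (fst \<omega>, fst (snd \<omega>))) \<in> borel_measurable borel"
  apply (rule borel_measurable_continuous_onI)
  apply (intro continuous_intros)
  done

lemma sel_meas: "(\<lambda>\<omega>::R3. (fst \<omega>, fst (snd \<omega>))) \<in> borel_measurable lborel"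
  using sel_meas0 by simp


lemma restr_meas:
  fixes \<alpha> :: "R2 set" and G :: "R3 \<Rightarrow> complex"
  assumes "G \<in> borel_measurable lborel" "closed \<alpha>"
  shows "(\<lambda>\<omega>. if (fst \<omega>, fst (snd \<omega>)) \<in> \<alpha> then G \<omega> else (0::complex)) \<in> borel_measurable lborel"
proof (rule measurable_If[OF assms(1)])
  show "(\<lambda>x. 0) \<in> borel_measurable lborel" by simp
  have "\<alpha> \<in> sets borel" using assms(2) by (simp add: borel_closed)
  from measurable_sets[OF sel_meas this]
  show "{\<omega>::R3 \<in> space lborel. (fst \<omega>, fst (snd \<omega>)) \<in> \<alpha>} \<in> sets lborel"
    by (simp add: vimage_def Collect_conj_eq Int_commute)
qed

lemma restr_integrable:
  fixes \<alpha> :: "R2 set" and G :: "R3 \<Rightarrow> complex"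
  assumes "integrable lborel G" "closed \<alpha>"
  shows "integrable lborel (\<lambda>\<omega>. if (fst \<omega>, fst (snd \<omega>)) \<in> \<alpha> then G \<omega> else (0::complex))"
proof (rule Bochner_Integration.integrable_bound[OF assms(1)])
  have "G \<in> borel_measurable lborel" using assms(1) by (rule borel_measurable_integrable)
  then show "(\<lambda>\<omega>. if (fst \<omega>, fst (snd \<omega>)) \<in> \<alpha> then G \<omega> else 0) \<in> borel_measurable lborel"
    using assms(2) by (rule restr_meas)
  show "AE x in lborel. norm (if (fst x, fst (snd x)) \<in> \<alpha> then G x else 0) \<le> norm (G x)"
    by auto
qed

lemma null_hyper:
  fixes a :: R3
  assumes "a \<noteq> 0"
  shows "{\<omega>::R3. a \<bullet> \<omega> = d} \<in> null_sets lborel"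
proof -
  have "negligible {\<omega>::R3. a \<bullet> \<omega> = d}" using assms by (intro negligible_hyperplane) simp
  then have n: "{\<omega>::R3. a \<bullet> \<omega> = d} \<in> null_sets lebesgue" by (simp add: negligible_iff_null_sets)
  have "{\<omega>::R3. a \<bullet> \<omega> = d} \<in> sets lborel" using closed_hyperplane[of a d] by (simp add: borel_closed)
  with n show ?thesis using null_sets_completion_iff by blast
qed

lemma AE_fst: "AE \<omega> in lborel. fst (\<omega>::R3) \<noteq> d"
proof -
  have "{\<omega>::R3. fst \<omega> = d} = {\<omega>::R3. (1,0,0) \<bullet> \<omega> = d}" by (auto simp: inner_prod_def)
  then have "{\<omega>::R3. fst \<omega> = d} \<in> null_sets lborel" using null_hyper[of "(1,0,0)" d] by (simp add: zero_prod_def)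
  from AE_not_in[OF this] show ?thesis by simp
qed

lemma AE_snd: "AE \<omega> in lborel. fst (snd (\<omega>::R3)) \<noteq> d"
proof -
  have "{\<omega>::R3. fst (snd \<omega>) = d} = {\<omega>::R3. (0,1,0) \<bullet> \<omega> = d}" by (auto simp: inner_prod_def)
  then have "{\<omega>::R3. fst (snd \<omega>) = d} \<in> null_sets lborel" using null_hyper[of "(0,1,0)" d] by (simp add: zero_prod_def)
  from AE_not_in[OF this] show ?thesis by simp
qed

lemma grid_unique:
  fixes a :: real
  assumes K: "K \<ge> 1" and a: "0 \<le> a" "a \<le> 1" and off: "\<forall>i\<le>K. a \<noteq> real i / real K"
  shows "\<exists>i0<K. \<forall>i<K. (real i / real K \<le> a \<and> a \<le> (real i + 1) / real K) \<longleftrightarrow> i = i0"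
proof -
  have Kp: "real K > 0" using K by simp
  define i0 where "i0 = nat \<lfloor>real K * a\<rfloor>"
  have a1: "a < 1" using off[rule_format, of K] a K by auto
  have ka: "0 \<le> real K * a" using a Kp by simp
  have r: "real i0 = real_of_int \<lfloor>real K * a\<rfloor>" unfolding i0_def using ka by simp
  have fl: "real i0 \<le> real K * a" "real K * a < real i0 + 1"
    unfolding r using floor_correct[of "real K * a"] by auto
  have "real K * a < real K" using a1 Kp by simp
  then have "real i0 < real K" using fl(1) by linarith
  then have i0K: "i0 < K" by simp
  have "(real i / real K \<le> a \<and> a \<le> (real i + 1) / real K) \<longleftrightarrow> i = i0" if "i < K" for i
  proof
    assume h: "real i / real K \<le> a \<and> a \<le> (real i + 1) / real K"
    have ne1: "a \<noteq> real i / real K" using off that by simp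
    have ne2: "a \<noteq> (real i + 1) / real K" using off[rule_format, of "Suc i"] that by (simp add: add.commute)
    have "real i / real K < a" "a < (real i + 1) / real K" using h ne1 ne2 by auto
    then have "real i < real K * a" "real K * a < real i + 1" using Kp by (simp_all add: field_simps)
    then have "\<lfloor>real K * a\<rfloor> = int i" by (intro floor_unique) auto
    then show "i = i0" unfolding i0_def by simp
  next
    assume "i = i0"
    then show "real i / real K \<le> a \<and> a \<le> (real i + 1) / real K" using fl Kp
      by (simp add: field_simps)
  qed
  then show ?thesis using i0K by blast
qed

lemma cis_x_meas: "(\<lambda>\<omega>::R3. cis (2 * pi * (x \<bullet> \<omega>))) \<in> borel_measurable lborel"
proof -
  have "(\<lambda>\<omega>::R3. cis (2 * pi * (x \<bullet> \<omega>))) \<in> borel_measurable borel"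
    by (rule borel_measurable_continuous_onI, intro continuous_intros)
  then show ?thesis by simp
qed

lemma integrable_cis:
  fixes H :: "R3 \<Rightarrow> complex"
  assumes "integrable lborel H"
  shows "integrable lborel (\<lambda>\<omega>. H \<omega> * cis (2 * pi * (x \<bullet> \<omega>)))"
proof (rule Bochner_Integration.integrable_bound[OF assms])
  have "H \<in> borel_measurable lborel" using assms by (rule borel_measurable_integrable)
  then show "(\<lambda>\<omega>. H \<omega> * cis (2 * pi * (x \<bullet> \<omega>))) \<in> borel_measurable lborel"
    using cis_x_meas by (rule borel_measurable_times)
  show "AE \<omega> in lborel. norm (H \<omega> * cis (2 * pi * (x \<bullet> \<omega>))) \<le> norm (H \<omega>)"
    by (simp add: norm_mult)
qed

lemma closed_sqr: "closed (sqr K i j)"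
  unfolding sqr_def by (intro closed_Times) auto

lemma closed_squares: "\<alpha> \<in> squares K \<Longrightarrow> closed \<alpha>"
  unfolding squares_eq using closed_sqr by auto

lemma decomp:
  fixes G :: "R3 \<Rightarrow> complex"
  assumes K: "K \<ge> 1" and G: "integrable lborel G" and supp: "\<forall>\<omega>. \<omega> \<notin> Nbhd \<delta> \<longrightarrow> G \<omega> = 0"
  shows "invft G x = (\<Sum>\<alpha>\<in>squares K. proj \<alpha> G x)"
proof -
  define R where "R = (\<lambda>\<alpha> \<omega>. if (fst \<omega>, fst (snd \<omega>)) \<in> \<alpha> then G \<omega> else (0::complex))"
  have Rint: "integrable lborel (\<lambda>\<omega>. R \<alpha> \<omega> * cis (2 * pi * (x \<bullet> \<omega>)))" if "\<alpha> \<in> squares K" for \<alpha>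
    unfolding R_def by (intro integrable_cis restr_integrable G closed_squares[OF that])
  have "(\<Sum>\<alpha>\<in>squares K. proj \<alpha> G x) = (\<Sum>\<alpha>\<in>squares K. \<integral>\<omega>. R \<alpha> \<omega> * cis (2 * pi * (x \<bullet> \<omega>)) \<partial>lborel)"
    unfolding proj_def invft_def R_def ..
  also have "\<dots> = (\<integral>\<omega>. (\<Sum>\<alpha>\<in>squares K. R \<alpha> \<omega> * cis (2 * pi * (x \<bullet> \<omega>))) \<partial>lborel)"
    by (subst Bochner_Integration.integral_sum) (auto intro: Rint)
  also have "\<dots> = (\<integral>\<omega>. G \<omega> * cis (2 * pi * (x \<bullet> \<omega>)) \<partial>lborel)"
  proof (rule integral_cong_AE)
    show "(\<lambda>\<omega>. \<Sum>\<alpha>\<in>squares K. R \<alpha> \<omega> * cis (2 * pi * (x \<bullet> \<omega>))) \<in> borel_measurable lborel"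
      using Rint by (intro borel_measurable_sum borel_measurable_integrable) 
    show "(\<lambda>\<omega>. G \<omega> * cis (2 * pi * (x \<bullet> \<omega>))) \<in> borel_measurable lborel"
      using integrable_cis[OF G] by (rule borel_measurable_integrable)
    define D where "D = (\<lambda>i. real i / real K) ` {..K}"
    have finD: "finite D" unfolding D_def by simp
    have "AE \<omega> in lborel. \<forall>d\<in>D. fst (\<omega>::R3) \<noteq> d \<and> fst (snd \<omega>) \<noteq> d"
      using finD by (intro AE_finite_allI) (auto intro: AE_conjI AE_fst AE_snd)
    then show "AE \<omega> in lborel. (\<Sum>\<alpha>\<in>squares K. R \<alpha> \<omega> * cis (2 * pi * (x \<bullet> \<omega>))) = G \<omega> * cis (2 * pi * (x \<bullet> \<omega>))"
    proof (rule AE_mp, intro AE_I2 impI)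
      fix \<omega> :: R3
      assume off: "\<forall>d\<in>D. fst \<omega> \<noteq> d \<and> fst (snd \<omega>) \<noteq> d"
      have "(\<Sum>\<alpha>\<in>squares K. R \<alpha> \<omega>) = G \<omega>"
      proof (cases "G \<omega> = 0")
        case True then show ?thesis unfolding R_def by (simp add: sum.neutral)
      next
        case False
        then have "\<omega> \<in> Nbhd \<delta>" using supp by blast
        then have ab: "0 \<le> fst \<omega>" "fst \<omega> \<le> 1" "0 \<le> fst (snd \<omega>)" "fst (snd \<omega>) \<le> 1"
          unfolding Nbhd_def by auto
        have offa: "\<forall>i\<le>K. fst \<omega> \<noteq> real i / real K" and offb: "\<forall>i\<le>K. fst (snd \<omega>) \<noteq> real i / real K"
          using off unfolding D_def by auto
        obtain i0 where i0: "i0 < K" "\<And>i. i < K \<Longrightarrow> (real i / real K \<le> fst \<omega> \<and> fst \<omega> \<le> (real i + 1) / real K) \<longleftrightarrow> i = i0"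
          using grid_unique[OF K ab(1,2) offa] by blast
        obtain j0 where j0: "j0 < K" "\<And>j. j < K \<Longrightarrow> (real j / real K \<le> fst (snd \<omega>) \<and> fst (snd \<omega>) \<le> (real j + 1) / real K) \<longleftrightarrow> j = j0"
          using grid_unique[OF K ab(3,4) offb] by blast
        have filt: "{\<alpha> \<in> squares K. (fst \<omega>, fst (snd \<omega>)) \<in> \<alpha>} = {sqr K i0 j0}"
        proof (intro equalityI subsetI)
          fix \<alpha> assume "\<alpha> \<in> {\<alpha> \<in> squares K. (fst \<omega>, fst (snd \<omega>)) \<in> \<alpha>}"
          then obtain i j where ij: "i < K" "j < K" "\<alpha> = sqr K i j" "(fst \<omega>, fst (snd \<omega>)) \<in> sqr K i j"
            unfolding squares_eq by auto
          then have "i = i0" "j = j0" using i0(2)[OF ij(1)] j0(2)[OF ij(2)] unfolding sqr_def by auto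
          then show "\<alpha> \<in> {sqr K i0 j0}" using ij by simp
        next
          fix \<alpha> assume "\<alpha> \<in> {sqr K i0 j0}"
          then have "\<alpha> = sqr K i0 j0" by simp
          moreover have "sqr K i0 j0 \<in> squares K" unfolding squares_eq using i0(1) j0(1) by auto
          moreover have "(fst \<omega>, fst (snd \<omega>)) \<in> sqr K i0 j0"
            using i0(2)[OF i0(1)] j0(2)[OF j0(1)] unfolding sqr_def by auto
          ultimately show "\<alpha> \<in> {\<alpha> \<in> squares K. (fst \<omega>, fst (snd \<omega>)) \<in> \<alpha>}" by simp
        qed
        have "(\<Sum>\<alpha>\<in>squares K. R \<alpha> \<omega>) = (\<Sum>\<alpha>\<in>{\<alpha> \<in> squares K. (fst \<omega>, fst (snd \<omega>)) \<in> \<alpha>}. G \<omega>)"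
          unfolding R_def by (rule sum.inter_filter[OF finite_squares, symmetric])
        then show ?thesis unfolding filt by simp
      qed
      then show "(\<Sum>\<alpha>\<in>squares K. R \<alpha> \<omega> * cis (2 * pi * (x \<bullet> \<omega>))) = G \<omega> * cis (2 * pi * (x \<bullet> \<omega>))"
        by (simp add: sum_distrib_right[symmetric])
    qed
  qed
  finally show ?thesis unfolding invft_def ..
qed

definition bm :: "(R3 \<Rightarrow> complex) \<Rightarrow> bool" where
  "bm f \<longleftrightarrow> f \<in> borel_measurable lborel \<and> (\<exists>M. \<forall>x. norm (f x) \<le> M)"

lemma bm_invft: "integrable lborel H \<Longrightarrow> bm (invft H)"
  unfolding bm_def using invft_meas invft_bound by blast

lemma bm_proj: "integrable lborel G \<Longrightarrow> \<alpha> \<in> squares K \<Longrightarrow> bm (proj \<alpha> G)"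
  unfolding proj_def by (intro bm_invft restr_integrable closed_squares) auto

lemma bm_zero: "bm (\<lambda>x. 0)" unfolding bm_def by auto

lemma bm_add: "bm f \<Longrightarrow> bm g \<Longrightarrow> bm (\<lambda>x. f x + g x)"
proof -
  assume "bm f" "bm g"
  then obtain M1 M2 where "\<forall>x. norm (f x) \<le> M1" "\<forall>x. norm (g x) \<le> M2"
    and m: "f \<in> borel_measurable lborel" "g \<in> borel_measurable lborel" unfolding bm_def by auto
  then have "\<forall>x. norm (f x + g x) \<le> M1 + M2" by (metis add_mono norm_triangle_le)
  then show ?thesis unfolding bm_def using m by auto
qed

lemma bm_sum: "finite S \<Longrightarrow> (\<And>\<alpha>. \<alpha> \<in> S \<Longrightarrow> bm (f \<alpha>)) \<Longrightarrow> bm (\<lambda>x. \<Sum>\<alpha>\<in>S. f \<alpha> x)"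
proof (induction S rule: finite_induct)
  case empty then show ?case by (simp add: bm_zero)
next
  case (insert a S)
  then show ?case by (simp add: bm_add)
qed

lemma set_int:
  assumes "bm f" "p > 0"
  shows "set_integrable lborel (ball c r) (\<lambda>x. norm (f x) powr p)"
proof -
  obtain M where M: "\<forall>x. norm (f x) \<le> M" and [measurable]: "f \<in> borel_measurable lborel"
    using assms unfolding bm_def by auto
  show ?thesis unfolding set_integrable_def
  proof (rule integrableI_bounded_set_indicator[where B="M powr p"])
    show "ball c r \<in> sets lborel" by simp
    show "(\<lambda>x. norm (f x) powr p) \<in> borel_measurable lborel" by measurable
    show "emeasure lborel (ball c r) < \<infinity>" by (rule emeasure_bounded_finite) simp
    show "AE x in lborel. x \<in> ball c r \<longrightarrow> norm (norm (f x) powr p) \<le> M powr p"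
      using M by (auto intro!: powr_mono2 less_imp_le[OF assms(2)])
  qed
qed

definition Ip :: "real \<Rightarrow> R3 set \<Rightarrow> (R3 \<Rightarrow> complex) \<Rightarrow> real" where
  "Ip p B f = (LINT x:B|lborel. norm (f x) powr p)"

lemma Ip_nonneg: "Ip p B f \<ge> 0"
  unfolding Ip_def set_lebesgue_integral_def by (rule integral_nonneg_AE) (auto simp: indicator_def)

lemma Lpn_Ip: "Lpn p B f = Ip p B f powr (1/p)"
  unfolding Lpn_def Ip_def ..

lemma Lpn_nonneg: "Lpn p B f \<ge> 0"
  unfolding Lpn_def by simp

lemma Lpn_pow: "p > 0 \<Longrightarrow> Lpn p B f powr p = Ip p B f"
  unfolding Lpn_Ip using Ip_nonneg[of p B f] by (simp add: powr_powr)

lemma setint_sum: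
  fixes f :: "'i \<Rightarrow> 'a \<Rightarrow> real"
  assumes "finite S" "\<And>i. i \<in> S \<Longrightarrow> set_integrable M A (f i)"
  shows "(LINT x:A|M. \<Sum>i\<in>S. f i x) = (\<Sum>i\<in>S. LINT x:A|M. f i x)"
    and "set_integrable M A (\<lambda>x. \<Sum>i\<in>S. f i x)"
proof -
  have i: "\<And>i. i \<in> S \<Longrightarrow> integrable M (\<lambda>x. indicator A x *\<^sub>R f i x)"
    using assms(2) unfolding set_integrable_def by blast
  show "(LINT x:A|M. \<Sum>i\<in>S. f i x) = (\<Sum>i\<in>S. LINT x:A|M. f i x)"
    unfolding set_lebesgue_integral_def scaleR_sum_right
    by (rule Bochner_Integration.integral_sum) (rule i)
  show "set_integrable M A (\<lambda>x. \<Sum>i\<in>S. f i x)"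
    unfolding set_integrable_def scaleR_sum_right
    by (rule Bochner_Integration.integrable_sum) (rule i)
qed

lemma pmean:
  fixes b :: "'i \<Rightarrow> real"
  assumes S: "finite S" and p: "p \<ge> 1" and b: "\<And>i. i \<in> S \<Longrightarrow> b i \<ge> 0"
  shows "(\<Sum>i\<in>S. b i) powr p \<le> real (card S) powr (p-1) * (\<Sum>i\<in>S. b i powr p)"
proof -
  define S' where "S' = {i\<in>S. b i > 0}"
  have finS': "finite S'" using S unfolding S'_def by simp
  have sumS: "(\<Sum>i\<in>S. b i) = (\<Sum>i\<in>S'. b i)"
    unfolding S'_def using S b by (intro sum.mono_neutral_right) (auto simp: less_le)
  have RHSnn: "0 \<le> real (card S) powr (p-1) * (\<Sum>i\<in>S. b i powr p)"
    by (intro mult_nonneg_nonneg sum_nonneg) auto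
  show ?thesis
  proof (cases "S' = {}")
    case True
    then show ?thesis using sumS RHSnn by simp
  next
    case False
    define m where "m = real (card S')"
    have m0: "m > 0" unfolding m_def using False finS' by (simp add: card_gt_0_iff)
    have "((\<Sum>i\<in>S'. (1/m) *\<^sub>R b i)) powr p \<le> (\<Sum>i\<in>S'. (1/m) * b i powr p)"
    proof (rule convex_on_sum[OF finS' False powr_convex[OF p]])
      show "(\<Sum>i\<in>S'. 1 / m) = 1" using m0 unfolding m_def by simp
      show "\<And>i. i \<in> S' \<Longrightarrow> 0 \<le> 1 / m" using m0 by simp
      show "\<And>i. i \<in> S' \<Longrightarrow> b i \<in> {0<..}" unfolding S'_def by simp
    qed
    then have "((\<Sum>i\<in>S'. b i) / m) powr p \<le> (\<Sum>i\<in>S'. b i powr p) / m"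
      by (simp add: sum_distrib_left[symmetric] sum_divide_distrib[symmetric])
    then have "(\<Sum>i\<in>S'. b i) powr p / m powr p \<le> (\<Sum>i\<in>S'. b i powr p) / m"
      using m0 by (simp add: powr_divide sum_nonneg less_imp_le S'_def)
    then have "(\<Sum>i\<in>S'. b i) powr p \<le> m powr p * ((\<Sum>i\<in>S'. b i powr p) / m)"
      using m0 by (simp add: field_simps)
    also have "\<dots> = m powr (p-1) * (\<Sum>i\<in>S'. b i powr p)"
      using m0 by (simp add: powr_diff field_simps)
    also have "\<dots> \<le> real (card S) powr (p-1) * (\<Sum>i\<in>S. b i powr p)"
    proof (rule mult_mono)
      have "card S' \<le> card S" unfolding S'_def using S by (intro card_mono) auto
      then show "m powr (p-1) \<le> real (card S) powr (p-1)"
        unfolding m_def using p m0 by (intro powr_mono2) (auto simp: m_def)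
      show "(\<Sum>i\<in>S'. b i powr p) \<le> (\<Sum>i\<in>S. b i powr p)"
        unfolding S'_def using S by (intro sum_mono2) auto
    qed (auto intro: sum_nonneg)
    finally show ?thesis using sumS by simp
  qed
qed

lemma proj_id: fixes V1 V2 W1 W2 t :: real
  assumes nz: "V1\<^sup>2 + V2\<^sup>2 \<noteq> 0" and t: "t = (W1*V1 + W2*V2) / (V1\<^sup>2 + V2\<^sup>2)"
  shows "(W1 - t*V1)\<^sup>2 + (W2 - t*V2)\<^sup>2 = (V1*W2 - V2*W1)\<^sup>2 / (V1\<^sup>2 + V2\<^sup>2)"
proof -
  define VV where "VV = V1\<^sup>2 + V2\<^sup>2"
  define D where "D = W1*V1 + W2*V2"
  have 1: "(W1 - t*V1)\<^sup>2 + (W2 - t*V2)\<^sup>2 = (W1\<^sup>2+W2\<^sup>2) - 2*t*D + t*(t*VV)"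
    unfolding VV_def D_def by (simp add: power2_eq_square algebra_simps)
  have 2: "t*VV = D" using nz unfolding t VV_def D_def by simp
  have 3: "(V1*W2 - V2*W1)\<^sup>2 = (W1\<^sup>2+W2\<^sup>2)*VV - D*D"
    unfolding VV_def D_def by (simp add: power2_eq_square algebra_simps)
  have 4: "t = D / VV" unfolding t D_def VV_def ..
  show ?thesis unfolding 1 2 3 VV_def[symmetric] using nz unfolding 4 VV_def[symmetric]
    by (simp add: field_simps)
qed

lemma geo:
  assumes K: "K \<ge> 1" and S: "S \<subseteq> squares K"
  shows "(\<exists>L. is_line L \<and> (\<forall>\<alpha>\<in>S. \<alpha> \<subseteq> strip K L)) \<or>
         (\<exists>\<alpha>1\<in>S. \<exists>\<alpha>2\<in>S. \<exists>\<alpha>3\<in>S. transverse (1 / real K ^ 2) \<alpha>1 \<alpha>2 \<alpha>3)"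
proof (cases "S = {}")
  case True
  have "is_line {(0,0) + t *\<^sub>R (1::real,0::real) | t. True}"
    unfolding is_line_def by (rule exI[of _ "(0,0)"], rule exI[of _ "(1,0)"]) (simp add: zero_prod_def)
  then show ?thesis using True by blast
next
  case False
  have Kp: "real K > 0" using K by simp
  define I where "I = {(i,j). i<K \<and> j<K \<and> sqr K i j \<in> S}"
  have finI: "finite I"
    by (rule finite_subset[of _ "{..<K} \<times> {..<K}"]) (auto simp: I_def)
  have SI: "\<alpha> \<in> S \<Longrightarrow> \<exists>i j. (i,j) \<in> I \<and> \<alpha> = sqr K i j" for \<alpha>
  proof -
    assume "\<alpha> \<in> S"
    then have "\<alpha> \<in> (\<lambda>(i,j). sqr K i j) ` ({..<K} \<times> {..<K})" using S unfolding squares_eq by blast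
    then obtain i j where "i < K" "j < K" "\<alpha> = sqr K i j" by auto
    then show ?thesis using \<open>\<alpha> \<in> S\<close> unfolding I_def by auto
  qed
  then have InE: "I \<noteq> {}" using False by blast
  define dd where "dd = (\<lambda>((i::nat,j::nat),(i'::nat,j'::nat)). (real i' - real i)\<^sup>2 + (real j' - real j)\<^sup>2)"
  have fin2: "finite (dd ` (I \<times> I))" using finI by simp
  have ne2: "dd ` (I \<times> I) \<noteq> {}" using InE by simp
  obtain z where z: "z \<in> I \<times> I" "dd z = Max (dd ` (I \<times> I))"
    using Max_in[OF fin2 ne2] by auto
  have zmax: "\<And>y. y \<in> I \<times> I \<Longrightarrow> dd y \<le> dd z"
    using z(2) Max_ge[OF fin2] by simp
  obtain i1 j1 i2 j2 where zz: "z = ((i1,j1),(i2,j2))" by (cases z) auto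
  have I1: "(i1,j1) \<in> I" and I2: "(i2,j2) \<in> I" using z(1) zz by auto
  define u where "u = (real i1 / real K, real j1 / real K)"
  define V1 where "V1 = real i2 - real i1"
  define V2 where "V2 = real j2 - real j1"
  define v where "v = (if (i1,j1) = (i2,j2) then (1,0) else (V1 / real K, V2 / real K))"
  define L where "L = {u + t *\<^sub>R v | t. True}"
  have vnz: "v \<noteq> 0"
  proof (cases "(i1,j1) = (i2,j2)")
    case True then show ?thesis unfolding v_def by (simp add: zero_prod_def)
  next
    case False
    then have "V1 \<noteq> 0 \<or> V2 \<noteq> 0" unfolding V1_def V2_def by auto
    then show ?thesis using False Kp unfolding v_def by (auto simp: zero_prod_def)
  qed
  have line: "is_line L" unfolding is_line_def L_def using vnz by blast
  have inL: "u + t *\<^sub>R v \<in> L" for t unfolding L_def by blast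
  show ?thesis
  proof (cases "\<forall>\<alpha>\<in>S. \<alpha> \<subseteq> strip K L")
    case True
    then show ?thesis using line by blast
  next
    case False
    then obtain \<alpha>3 \<xi> where a3: "\<alpha>3 \<in> S" "\<xi> \<in> \<alpha>3" "\<not> infdist \<xi> L \<le> 100 / real K"
      unfolding strip_def by blast
    obtain i3 j3 where I3: "(i3,j3) \<in> I" and a3e: "\<alpha>3 = sqr K i3 j3" using SI[OF a3(1)] by blast
    define f1 where "f1 = real K * fst \<xi> - real i3"
    define f2 where "f2 = real K * snd \<xi> - real j3"
    have f: "0 \<le> f1" "f1 \<le> 1" "0 \<le> f2" "f2 \<le> 1"
      using mem_sqr[OF K, of \<xi> i3 j3] a3 a3e unfolding f1_def f2_def by auto
    define Q1 where "Q1 = real i3 - real i1"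
    define Q2 where "Q2 = real j3 - real j1"
    have Qle: "Q1\<^sup>2 + Q2\<^sup>2 \<le> V1\<^sup>2 + V2\<^sup>2"
      using zmax[of "((i1,j1),(i3,j3))"] I1 I3 unfolding zz dd_def Q1_def Q2_def V1_def V2_def by simp
    have neq: "(i1,j1) \<noteq> (i2,j2)"
    proof
      assume eq: "(i1,j1) = (i2,j2)"
      then have "V1 = 0" "V2 = 0" unfolding V1_def V2_def by auto
      with Qle have "Q1\<^sup>2 + Q2\<^sup>2 \<le> 0" by simp
      then have "Q1 = 0" "Q2 = 0"
        by (smt (verit) zero_le_power2 zero_eq_power2)+
      then have "i3 = i1" "j3 = j1" unfolding Q1_def Q2_def by auto
      have "infdist \<xi> L \<le> dist \<xi> u" using infdist_le[OF inL[of 0]] by simp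
      also have "dist \<xi> u = sqrt ((fst \<xi> - real i1 / real K)\<^sup>2 + (snd \<xi> - real j1 / real K)\<^sup>2)"
        unfolding u_def by (cases \<xi>) (simp add: dist_Pair_Pair dist_real_def)
      also have "\<dots> \<le> \<bar>fst \<xi> - real i1 / real K\<bar> + \<bar>snd \<xi> - real j1 / real K\<bar>"
        by (rule sqrt_sum_squares_le_sum_abs)
      also have "\<dots> = (\<bar>f1\<bar> + \<bar>f2\<bar>) / real K"
      proof -
        have "fst \<xi> - real i1 / real K = f1 / real K" "snd \<xi> - real j1 / real K = f2 / real K"
          unfolding f1_def f2_def \<open>i3 = i1\<close> \<open>j3 = j1\<close> using Kp by (simp_all add: field_simps)
        then show ?thesis using Kp by (simp add: add_divide_distrib)
      qed
      also have "\<dots> \<le> 100 / real K" using f Kp by (intro divide_right_mono) auto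
      finally show False using a3(3) by simp
    qed
    define VV where "VV = V1\<^sup>2 + V2\<^sup>2"
    have VV1: "VV \<ge> 1"
    proof -
      have "i1 \<noteq> i2 \<or> j1 \<noteq> j2" using neq by auto
      then have "\<bar>V1\<bar> \<ge> 1 \<or> \<bar>V2\<bar> \<ge> 1" unfolding V1_def V2_def by auto
      then have "V1\<^sup>2 \<ge> 1 \<or> V2\<^sup>2 \<ge> 1" by (metis abs_le_square_iff abs_one power_one)
      then show ?thesis unfolding VV_def by (smt (verit) zero_le_power2)
    qed
    have vv: "v = (V1 / real K, V2 / real K)" unfolding v_def by (rule if_not_P[OF neq])
    define W1 where "W1 = Q1 + f1"
    define W2 where "W2 = Q2 + f2"
    have far: "(V1*W2 - V2*W1)\<^sup>2 > 10000 * VV"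
    proof -
      define t where "t = (W1*V1 + W2*V2) / VV"
      have "infdist \<xi> L \<le> dist \<xi> (u + t *\<^sub>R v)" using infdist_le[OF inL[of t]] by simp
      then have d100: "dist \<xi> (u + t *\<^sub>R v) > 100 / real K" using a3(3) by simp
      have "dist \<xi> (u + t *\<^sub>R v) = sqrt (((W1 - t*V1) / real K)\<^sup>2 + ((W2 - t*V2) / real K)\<^sup>2)"
        unfolding u_def vv W1_def W2_def Q1_def Q2_def f1_def f2_def using Kp
        by (cases \<xi>) (simp add: dist_Pair_Pair dist_real_def field_simps)
      also have "\<dots> = sqrt ((W1 - t*V1)\<^sup>2 + (W2 - t*V2)\<^sup>2) / real K"
        using Kp by (simp add: power_divide real_sqrt_divide add_divide_distrib[symmetric])
      finally have "sqrt ((W1 - t*V1)\<^sup>2 + (W2 - t*V2)\<^sup>2) > 100"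
        using d100 Kp by (simp add: divide_strict_right_mono_neg field_simps)
      then have "sqrt ((W1 - t*V1)\<^sup>2 + (W2 - t*V2)\<^sup>2) > sqrt (100\<^sup>2)" by simp
      then have g: "(W1 - t*V1)\<^sup>2 + (W2 - t*V2)\<^sup>2 > 10000"
        using real_sqrt_less_iff by fastforce
      have "(W1 - t*V1)\<^sup>2 + (W2 - t*V2)\<^sup>2 = (V1*W2 - V2*W1)\<^sup>2 / VV"
        using VV1 unfolding VV_def by (intro proj_id) (auto simp: t_def VV_def)
      with g have "(V1*W2 - V2*W1)\<^sup>2 / VV > 10000" by simp
      then show ?thesis using VV1 by (simp add: field_simps)
    qed
    have trans: "transverse (1 / real K ^ 2) (sqr K i1 j1) (sqr K i2 j2) \<alpha>3"
      unfolding transverse_def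
    proof (intro ballI)
      fix x y w assume x: "x \<in> sqr K i1 j1 \<inter> {0..1} \<times> {0..1}" and y: "y \<in> sqr K i2 j2 \<inter> {0..1} \<times> {0..1}"
        and w: "w \<in> \<alpha>3 \<inter> {0..1} \<times> {0..1}"
      note mx = mem_sqr[OF K, of x i1 j1] and my = mem_sqr[OF K, of y i2 j2]
        and mw = mem_sqr[OF K, of w i3 j3]
      define d11 where "d11 = (real K * fst y - real i2) - (real K * fst x - real i1)"
      define d12 where "d12 = (real K * snd y - real j2) - (real K * snd x - real j1)"
      define d21 where "d21 = (real K * fst w - real i3) - (real K * fst x - real i1)"
      define d22 where "d22 = (real K * snd w - real j3) - (real K * snd x - real j1)"
      have dd: "\<bar>d11\<bar>\<le>1" "\<bar>d12\<bar> \<le> 1" "\<bar>d21\<bar>\<le>1" "\<bar>d22\<bar>\<le>1"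
        using mx my mw x y w a3e unfolding d11_def d12_def d21_def d22_def by auto
      have k7: "\<bar>(V1+d11)*(Q2+d22) - (V2+d12)*(Q1+d21)\<bar> \<ge> 7"
        by (rule key_geo[OF VV1[unfolded VV_def] far[unfolded VV_def W1_def W2_def] Qle f dd])
      have "(V1+d11)*(Q2+d22) - (V2+d12)*(Q1+d21) =
          real K ^ 2 * ((fst y - fst x)*(snd w - snd x) - (snd y - snd x)*(fst w - fst x))"
        unfolding V1_def V2_def Q1_def Q2_def d11_def d12_def d21_def d22_def
        by (simp add: algebra_simps power2_eq_square)
      with k7 have c7: "real K ^ 2 * \<bar>(fst y - fst x)*(snd w - snd x) - (snd y - snd x)*(fst w - fst x)\<bar> \<ge> 7"
        by (simp add: abs_mult)
      have "1 / real K ^ 2 < 4/27 * (7 / real K ^ 2)" using Kp by (simp add: field_simps)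
      also have "\<dots> \<le> 4/27 * \<bar>(fst y - fst x)*(snd w - snd x) - (snd y - snd x)*(fst w - fst x)\<bar>"
        using c7 Kp by (simp add: field_simps)
      also have "\<dots> \<le> \<bar>det3 (unormal x) (unormal y) (unormal w)\<bar>"
        using x y w by (intro det_lemma) auto
      finally show "1 / real K ^ 2 < \<bar>det3 (unormal x) (unormal y) (unormal w)\<bar>" .
    qed
    have "sqr K i1 j1 \<in> S" "sqr K i2 j2 \<in> S" using I1 I2 unfolding I_def by auto
    then show ?thesis using trans a3(1) by blast
  qed
qed

lemma small_part:
  fixes G :: "R3 \<Rightarrow> complex"
  assumes p: "p \<ge> 2" and K: "K \<ge> 1" and G: "integrable lborel G"
    and Sm: "Sm \<subseteq> squares K" and X: "X \<ge> 0"
    and small: "\<And>\<alpha>. \<alpha> \<in> Sm \<Longrightarrow> Lpn p (ball c r) (proj \<alpha> G) < X"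
  shows "Ip p (ball c r) (\<lambda>x. \<Sum>\<alpha>\<in>Sm. proj \<alpha> G x) \<le> (real K ^ 2 * X) powr p"
proof -
  define B where "B = ball c r"
  have p0: "p > 0" using p by simp
  have finSm: "finite Sm" using Sm finite_squares by (rule finite_subset)
  have bmP: "\<And>\<alpha>. \<alpha> \<in> Sm \<Longrightarrow> bm (proj \<alpha> G)" using Sm G bm_proj by blast
  have bmS: "bm (\<lambda>x. \<Sum>\<alpha>\<in>Sm. proj \<alpha> G x)" using bmP finSm by (intro bm_sum) auto
  define s where "s = card Sm"
  have sK: "real s \<le> real K ^ 2"
  proof -
    have "s \<le> card (squares K)" unfolding s_def using Sm finite_squares by (rule card_mono[rotated])
    then show ?thesis using card_squares[of K] by (metis of_nat_le_iff of_nat_power order_trans)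
  qed
  have pw: "norm (\<Sum>\<alpha>\<in>Sm. proj \<alpha> G x) powr p \<le> real s powr (p-1) * (\<Sum>\<alpha>\<in>Sm. norm (proj \<alpha> G x) powr p)" for x
  proof -
    have "norm (\<Sum>\<alpha>\<in>Sm. proj \<alpha> G x) powr p \<le> (\<Sum>\<alpha>\<in>Sm. norm (proj \<alpha> G x)) powr p"
      using p0 by (intro powr_mono2 norm_sum) auto
    also have "\<dots> \<le> real s powr (p-1) * (\<Sum>\<alpha>\<in>Sm. norm (proj \<alpha> G x) powr p)"
      unfolding s_def using finSm p by (intro pmean) auto
    finally show ?thesis .
  qed
  have si: "\<And>\<alpha>. \<alpha> \<in> Sm \<Longrightarrow> set_integrable lborel B (\<lambda>x. norm (proj \<alpha> G x) powr p)"
    unfolding B_def using bmP p0 set_int by blast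
  have "Ip p B (\<lambda>x. \<Sum>\<alpha>\<in>Sm. proj \<alpha> G x) \<le> (LINT x:B|lborel. real s powr (p-1) * (\<Sum>\<alpha>\<in>Sm. norm (proj \<alpha> G x) powr p))"
    unfolding Ip_def
  proof (rule set_integral_mono)
    show "set_integrable lborel B (\<lambda>x. norm (\<Sum>\<alpha>\<in>Sm. proj \<alpha> G x) powr p)"
      unfolding B_def using bmS p0 by (rule set_int)
    show "set_integrable lborel B (\<lambda>x. real s powr (p-1) * (\<Sum>\<alpha>\<in>Sm. norm (proj \<alpha> G x) powr p))"
      using setint_sum(2)[OF finSm si] by (rule set_integrable_mult_right)
  qed (rule pw)
  also have "\<dots> = real s powr (p-1) * (\<Sum>\<alpha>\<in>Sm. Ip p B (proj \<alpha> G))"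
    unfolding Ip_def using setint_sum(1)[OF finSm si] by simp
  also have "\<dots> \<le> real s powr (p-1) * (real s * X powr p)"
  proof (rule mult_left_mono)
    have "Ip p B (proj \<alpha> G) \<le> X powr p" if "\<alpha> \<in> Sm" for \<alpha>
    proof -
      have "Ip p B (proj \<alpha> G) = Lpn p B (proj \<alpha> G) powr p" using Lpn_pow[OF p0] by simp
      also have "\<dots> \<le> X powr p" using small[OF that] Lpn_nonneg p0 unfolding B_def
        by (intro powr_mono2) (auto intro: less_imp_le)
      finally show ?thesis .
    qed
    then have "(\<Sum>\<alpha>\<in>Sm. Ip p B (proj \<alpha> G)) \<le> (\<Sum>\<alpha>\<in>Sm. X powr p)" by (rule sum_mono)
    then show "(\<Sum>\<alpha>\<in>Sm. Ip p B (proj \<alpha> G)) \<le> real s * X powr p" unfolding s_def by simp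
  qed simp
  also have "\<dots> \<le> (real K ^ 2 * X) powr p"
  proof (cases "s = 0")
    case True then show ?thesis by simp
  next
    case False
    then have "real s powr (p-1) * (real s * X powr p) = real s powr p * X powr p"
      by (simp add: powr_diff field_simps)
    also have "\<dots> \<le> (real K ^ 2) powr p * X powr p"
      using sK p0 by (intro mult_right_mono powr_mono2) auto
    also have "\<dots> = (real K ^ 2 * X) powr p" using X by (simp add: powr_mult)
    finally show ?thesis .
  qed
  finally show ?thesis unfolding B_def .
qed

theorem proposition4p1:
  fixes p \<delta> :: real
  assumes "p \<ge> 2" and "\<delta> > 0"
  shows "\<exists>C>0. \<forall>(K::nat) (G :: R3 \<Rightarrow> complex) (c :: R3).
    K \<ge> 1 \<longrightarrow> integrable lborel G \<longrightarrow> (\<forall>\<omega>. \<omega> \<notin> Nbhd \<delta> \<longrightarrow> G \<omega> = 0) \<longrightarrow>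
    (let F = invft G; B = ball c (real K ^ 2);
         Sbig = {\<alpha> \<in> squares K. Lpn p B (proj \<alpha> G) \<ge> 1 / (100 * real K ^ 2) * Lpn p B F} in
      Lpn p B F \<le> C * Max ((\<lambda>\<alpha>. Lpn p B (proj \<alpha> G)) ` squares K)
    \<or> (\<exists>L. is_line L \<and>
         Lpn p B F \<le> C * Lpn p B (\<lambda>x. \<Sum>\<alpha>\<in>{\<alpha> \<in> Sbig. \<alpha> \<subseteq> strip K L}. proj \<alpha> G x))
    \<or> (\<exists>\<alpha>1\<in>squares K. \<exists>\<alpha>2\<in>squares K. \<exists>\<alpha>3\<in>squares K.
         transverse (1 / real K ^ 2) \<alpha>1 \<alpha>2 \<alpha>3 \<and>
         Lpn p B F \<le> C * real K ^ 2 *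
           (Lpn p B (proj \<alpha>1 G) * Lpn p B (proj \<alpha>2 G) * Lpn p B (proj \<alpha>3 G)) powr (1 / 3)))"
proof (intro exI[of _ "100::real"] conjI allI impI)
  show "(100::real) > 0" by simp
  fix K :: nat and G :: "R3 \<Rightarrow> complex" and c :: R3
  assume K: "K \<ge> 1" and G: "integrable lborel G" and supp: "\<forall>\<omega>. \<omega> \<notin> Nbhd \<delta> \<longrightarrow> G \<omega> = 0"
  have p: "p \<ge> 2" using assms(1) .
  have p0: "p > 0" using p by simp
  have Kp: "real K > 0" using K by simp
  define F where "F = invft G"
  define B where "B = ball c (real K ^ 2)"
  define T where "T = Lpn p B F"
  define X where "X = 1 / (100 * real K ^ 2) * T"
  define Sbig where "Sbig = {\<alpha> \<in> squares K. Lpn p B (proj \<alpha> G) \<ge> X}"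
  define Sm where "Sm = squares K - Sbig"
  define fb where "fb = (\<lambda>x. \<Sum>\<alpha>\<in>Sbig. proj \<alpha> G x)"
  define fs where "fs = (\<lambda>x. \<Sum>\<alpha>\<in>Sm. proj \<alpha> G x)"
  have T0: "T \<ge> 0" unfolding T_def by (rule Lpn_nonneg)
  have X0: "X \<ge> 0" unfolding X_def using T0 by simp
  have SbigQ: "Sbig \<subseteq> squares K" unfolding Sbig_def by auto
  have SmQ: "Sm \<subseteq> squares K" unfolding Sm_def by auto
  have finQ: "finite (squares K)" by (rule finite_squares)
  have Fdec: "F x = fb x + fs x" for x
  proof -
    have "F x = (\<Sum>\<alpha>\<in>squares K. proj \<alpha> G x)" unfolding F_def using decomp[OF K G supp] .
    also have "\<dots> = fs x + fb x" unfolding fs_def fb_def Sm_def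
      by (rule sum.subset_diff[OF SbigQ finQ])
    finally show ?thesis by simp
  qed
  have bmF: "bm F" unfolding F_def using G by (rule bm_invft)
  have bmb: "bm fb" unfolding fb_def using SbigQ finite_subset[OF SbigQ finQ]
    by (intro bm_sum bm_proj[OF G]) auto
  have bms: "bm fs" unfolding fs_def using SmQ finite_subset[OF SmQ finQ]
    by (intro bm_sum bm_proj[OF G]) auto
  have sm_bound: "Ip p B fs \<le> (real K ^ 2 * X) powr p"
    unfolding fs_def B_def
  proof (rule small_part[OF p K G SmQ X0])
    fix \<alpha> assume "\<alpha> \<in> Sm"
    then show "Lpn p (ball c (real K ^ 2)) (proj \<alpha> G) < X" unfolding Sm_def Sbig_def B_def by auto
  qed
  have KX: "real K ^ 2 * X = T / 100" unfolding X_def using Kp by (simp add: field_simps)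
  have pw: "norm (F x) powr p \<le> 2 powr (p-1) * (norm (fb x) powr p + norm (fs x) powr p)" for x
  proof -
    have "norm (F x) powr p \<le> (norm (fb x) + norm (fs x)) powr p"
      unfolding Fdec using p0 by (intro powr_mono2 norm_triangle_ineq) auto
    also have "\<dots> = (\<Sum>i\<in>{0::nat,1}. (if i = 0 then norm (fb x) else norm (fs x))) powr p" by simp
    also have "\<dots> \<le> real (card {0::nat,1}) powr (p-1) * (\<Sum>i\<in>{0::nat,1}. (if i = 0 then norm (fb x) else norm (fs x)) powr p)"
      using p by (intro pmean) auto
    also have "\<dots> = 2 powr (p-1) * (norm (fb x) powr p + norm (fs x) powr p)" by simp
    finally show ?thesis .
  qed
  have sF: "set_integrable lborel B (\<lambda>x. norm (F x) powr p)" unfolding B_def using bmF p0 by (rule set_int)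
  have sb: "set_integrable lborel B (\<lambda>x. norm (fb x) powr p)" unfolding B_def using bmb p0 by (rule set_int)
  have ss: "set_integrable lborel B (\<lambda>x. norm (fs x) powr p)" unfolding B_def using bms p0 by (rule set_int)
  have "T powr p = Ip p B F" unfolding T_def using Lpn_pow[OF p0] by simp
  also have "\<dots> \<le> (LINT x:B|lborel. 2 powr (p-1) * (norm (fb x) powr p + norm (fs x) powr p))"
    unfolding Ip_def
    by (rule set_integral_mono[OF sF _ pw]) (intro set_integrable_mult_right set_integral_add(1) sb ss)
  also have "\<dots> = 2 powr (p-1) * (Ip p B fb + Ip p B fs)"
    unfolding Ip_def using set_integral_add(2)[OF sb ss] by simp
  also have "\<dots> \<le> 2 powr (p-1) * Ip p B fb + 2 powr (p-1) * (T/100) powr p"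
    using sm_bound unfolding KX by (simp add: distrib_left)
  also have "2 powr (p-1) * (T/100) powr p \<le> T powr p / 2"
  proof -
    have "2 powr (p-1) * (T/100) powr p = (2 powr p * (T/100) powr p) / 2"
      by (simp add: powr_diff)
    also have "\<dots> = (T/50) powr p / 2" using T0 by (simp add: powr_mult[symmetric])
    also have "\<dots> \<le> T powr p / 2" using T0 p0 by (intro divide_right_mono powr_mono2) auto
    finally show ?thesis .
  qed
  finally have "T powr p \<le> 2 * (2 powr (p-1) * Ip p B fb)" by simp
  also have "\<dots> = (2 * Lpn p B fb) powr p"
    using Lpn_pow[OF p0, of B fb] by (simp add: powr_mult powr_diff)
  finally have Tp: "T powr p \<le> (2 * Lpn p B fb) powr p" .
  have Tb: "T \<le> 2 * Lpn p B fb"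
  proof (rule ccontr)
    assume "\<not> T \<le> 2 * Lpn p B fb"
    then have "(2 * Lpn p B fb) powr p < T powr p"
      using p0 Lpn_nonneg[of p B fb] by (intro powr_less_mono2) auto
    then show False using Tp by simp
  qed
  have Tb100: "T \<le> 100 * Lpn p B fb" using Tb Lpn_nonneg[of p B fb] by simp
  have goal: "T \<le> 100 * Max ((\<lambda>\<alpha>. Lpn p B (proj \<alpha> G)) ` squares K)
    \<or> (\<exists>L. is_line L \<and> T \<le> 100 * Lpn p B (\<lambda>x. \<Sum>\<alpha>\<in>{\<alpha> \<in> Sbig. \<alpha> \<subseteq> strip K L}. proj \<alpha> G x))
    \<or> (\<exists>\<alpha>1\<in>squares K. \<exists>\<alpha>2\<in>squares K. \<exists>\<alpha>3\<in>squares K.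
         transverse (1 / real K ^ 2) \<alpha>1 \<alpha>2 \<alpha>3 \<and>
         T \<le> 100 * real K ^ 2 *
           (Lpn p B (proj \<alpha>1 G) * Lpn p B (proj \<alpha>2 G) * Lpn p B (proj \<alpha>3 G)) powr (1 / 3))"
  proof -
    from geo[OF K SbigQ] show ?thesis
    proof (elim disjE exE conjE bexE)
      fix L assume L: "is_line L" "\<forall>\<alpha>\<in>Sbig. \<alpha> \<subseteq> strip K L"
      then have "{\<alpha> \<in> Sbig. \<alpha> \<subseteq> strip K L} = Sbig" by auto
      then have "T \<le> 100 * Lpn p B (\<lambda>x. \<Sum>\<alpha>\<in>{\<alpha> \<in> Sbig. \<alpha> \<subseteq> strip K L}. proj \<alpha> G x)"
        using Tb100 unfolding fb_def by simp
      then show ?thesis using L(1) by blast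
    next
      fix \<alpha>1 \<alpha>2 \<alpha>3 assume a: "\<alpha>1 \<in> Sbig" "\<alpha>2 \<in> Sbig" "\<alpha>3 \<in> Sbig"
        and tr: "transverse (1 / real K ^ 2) \<alpha>1 \<alpha>2 \<alpha>3"
      have ge: "X \<le> Lpn p B (proj \<alpha>1 G)" "X \<le> Lpn p B (proj \<alpha>2 G)" "X \<le> Lpn p B (proj \<alpha>3 G)"
        using a unfolding Sbig_def by auto
      have "X * X * X \<le> Lpn p B (proj \<alpha>1 G) * Lpn p B (proj \<alpha>2 G) * Lpn p B (proj \<alpha>3 G)"
        using ge X0 by (intro mult_mono) auto
      then have "(X * X * X) powr (1/3) \<le> (Lpn p B (proj \<alpha>1 G) * Lpn p B (proj \<alpha>2 G) * Lpn p B (proj \<alpha>3 G)) powr (1/3)"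
        using X0 by (intro powr_mono2) auto
      moreover have "(X * X * X) powr (1/3) = X"
      proof -
        have "X * X * X = X powr 3" using X0
          by (cases "X = 0") (simp_all add: powr_numeral power3_eq_cube)
        moreover have "(X powr 3) powr (1/3) = X powr (3 * (1/3))" by (rule powr_powr)
        ultimately show ?thesis using X0 by simp
      qed
      ultimately have "X \<le> (Lpn p B (proj \<alpha>1 G) * Lpn p B (proj \<alpha>2 G) * Lpn p B (proj \<alpha>3 G)) powr (1/3)"
        by simp
      then have "100 * real K ^ 2 * X \<le> 100 * real K ^ 2 *
           (Lpn p B (proj \<alpha>1 G) * Lpn p B (proj \<alpha>2 G) * Lpn p B (proj \<alpha>3 G)) powr (1 / 3)"
        by (intro mult_left_mono) auto
      moreover have "100 * real K ^ 2 * X = T" unfolding X_def using Kp by simp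
      ultimately show ?thesis using a tr SbigQ by blast
    qed
  qed
  show "let F = invft G; B = ball c (real K ^ 2);
         Sbig = {\<alpha> \<in> squares K. Lpn p B (proj \<alpha> G) \<ge> 1 / (100 * real K ^ 2) * Lpn p B F} in
      Lpn p B F \<le> 100 * Max ((\<lambda>\<alpha>. Lpn p B (proj \<alpha> G)) ` squares K)
    \<or> (\<exists>L. is_line L \<and>
         Lpn p B F \<le> 100 * Lpn p B (\<lambda>x. \<Sum>\<alpha>\<in>{\<alpha> \<in> Sbig. \<alpha> \<subseteq> strip K L}. proj \<alpha> G x))
    \<or> (\<exists>\<alpha>1\<in>squares K. \<exists>\<alpha>2\<in>squares K. \<exists>\<alpha>3\<in>squares K.
         transverse (1 / real K ^ 2) \<alpha>1 \<alpha>2 \<alpha>3 \<and>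
         Lpn p B F \<le> 100 * real K ^ 2 *
           (Lpn p B (proj \<alpha>1 G) * Lpn p B (proj \<alpha>2 G) * Lpn p B (proj \<alpha>3 G)) powr (1 / 3))"
    unfolding Let_def F_def[symmetric] B_def[symmetric] T_def[symmetric] X_def[symmetric]
      Sbig_def[symmetric] using goal .
qed

end
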